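(* Let $N$ be an $m\times n$ matrix with $m,n\ge 3$ which is a (totally unimodular) compact representation matrix of a $3$-connected regular matroid. If $N$ contains, up to row and column permutations and scaling of rows and columns by $-1$, the submatrix $\begin{bmatrix}1&1\\1&1\end{bmatrix}$, then $N$ is not strongly unimodular.
   Context: A real matrix is totally unimodular (TU) if every square submatrix has determinant $0$, $+1$ or $-1$. A matrix $A$ is strongly unimodular (SU) if (i) $A$ is TU, and (ii) every matrix obtained from $A$ by setting a single $\pm1$ entry to $0$ is also TU. A compact representation matrix of a matroid $M$ over $\mathbb R$ is a matrix $A$ with $m$ rows such that $M$ is the column matroid of $[I_m\,|\,A]$. *)

theory Defs
  imports "Jordan_Normal_Form.Determinant" "Jordan_Normal_Form.DL_Submatrix"
begin

definition totally_unimodular :: "real mat \<Rightarrow> bool" where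
  "totally_unimodular A \<longleftrightarrow>
     (\<forall>I J. I \<subseteq> {..<dim_row A} \<longrightarrow> J \<subseteq> {..<dim_col A} \<longrightarrow> card I = card J \<longrightarrow>
        det (submatrix A I J) \<in> {-1, 0, 1})"

definition zero_entry :: "real mat \<Rightarrow> nat \<Rightarrow> nat \<Rightarrow> real mat" where
  "zero_entry A i j = mat (dim_row A) (dim_col A) (\<lambda>(k,l). if (k,l) = (i,j) then 0 else A $$ (k,l))"

definition strongly_unimodular :: "real mat \<Rightarrow> bool" where
  "strongly_unimodular A \<longleftrightarrow> totally_unimodular A \<and>
     (\<forall>i<dim_row A. \<forall>j<dim_col A. A $$ (i,j) \<in> {1, -1} \<longrightarrow> totally_unimodular (zero_entry A i j))"

definition id_append :: "real mat \<Rightarrow> real mat" where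
  "id_append A = mat (dim_row A) (dim_row A + dim_col A)
     (\<lambda>(i,j). if j < dim_row A then (if i = j then 1 else 0) else A $$ (i, j - dim_row A))"

text \<open>Column matroid over the reals: independence of a set of column indices.\<close>
definition col_indep :: "real mat \<Rightarrow> nat set \<Rightarrow> bool" where
  "col_indep B X \<longleftrightarrow> X \<subseteq> {..<dim_col B} \<and>
     (\<forall>c :: nat \<Rightarrow> real. (\<forall>i<dim_row B. (\<Sum>j\<in>X. c j * B $$ (i,j)) = 0) \<longrightarrow> (\<forall>j\<in>X. c j = 0))"

definition col_rank :: "real mat \<Rightarrow> nat set \<Rightarrow> nat" where
  "col_rank B X = Max {card Y | Y. Y \<subseteq> X \<and> col_indep B Y}"

definition k_separation :: "real mat \<Rightarrow> nat \<Rightarrow> nat set \<Rightarrow> bool" where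
  "k_separation B k X \<longleftrightarrow> (let E = {..<dim_col B} in
     X \<subseteq> E \<and> card X \<ge> k \<and> card (E - X) \<ge> k \<and>
     int (col_rank B X) + int (col_rank B (E - X)) - int (col_rank B E) < int k)"

definition matroid_connected :: "nat \<Rightarrow> real mat \<Rightarrow> bool" where
  "matroid_connected n B \<longleftrightarrow> (\<forall>k. 1 \<le> k \<and> k < n \<longrightarrow> (\<nexists>X. k_separation B k X))"

end

theory Submission
  imports Defs
begin


definition lm :: "'a mat \<Rightarrow> nat \<Rightarrow> (nat\<Rightarrow>nat) \<Rightarrow> (nat\<Rightarrow>nat) \<Rightarrow> 'a mat" where
 "lm A K fr fc = mat K K (\<lambda>(i,j). A $$ (fr i, fc j))"

lemma lm_carrier[simp]: "lm A K fr fc \<in> carrier_mat K K" by (simp add: lm_def)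
lemma lm_dim[simp]: "dim_row (lm A K fr fc) = K" "dim_col (lm A K fr fc) = K" by (simp_all add: lm_def)
lemma lm_index[simp]: "i < K \<Longrightarrow> j < K \<Longrightarrow> lm A K fr fc $$ (i,j) = A $$ (fr i, fc j)"
  by (simp add: lm_def)

lemma pos_perm:
  assumes inj: "inj_on fr {..<K}"
  defines "I \<equiv> fr ` {..<K}"
  defines "p \<equiv> (\<lambda>i. if i < K then card {x\<in>I. x < fr i} else i)"
  shows "p permutes {0..<K}" and "\<And>i. i < K \<Longrightarrow> pick I (p i) = fr i"
proof -
  have cI: "card I = K" unfolding I_def using card_image[OF inj] by simp
  have fI: "finite I" unfolding I_def by simp
  show pk: "\<And>i. i < K \<Longrightarrow> pick I (p i) = fr i"
    unfolding p_def using pick_card_in_set[of _ I] I_def by auto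
  have lt: "p i < K" if "i < K" for i
  proof -
    have "{x\<in>I. x < fr i} \<subset> I" using that I_def by auto
    then have "card {x\<in>I. x < fr i} < card I" using fI psubset_card_mono by blast
    then show ?thesis using cI that p_def by simp
  qed
  have injp: "inj_on p {0..<K}"
  proof (rule inj_onI)
    fix x y assume "x \<in> {0..<K}" "y \<in> {0..<K}" "p x = p y"
    then have "fr x = fr y" using pk by (metis atLeastLessThan_iff)
    then show "x = y" using inj \<open>x \<in> {0..<K}\<close> \<open>y \<in> {0..<K}\<close> by (auto dest: inj_onD)
  qed
  have "p ` {0..<K} \<subseteq> {0..<K}" using lt by auto
  then have "p ` {0..<K} = {0..<K}" using endo_inj_surj[OF _ _ injp] by auto
  then have "bij_betw p {0..<K} {0..<K}" using injp by (simp add: bij_betw_def)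
  then show "p permutes {0..<K}" by (rule bij_imp_permutes) (simp add: p_def)
qed

lemma det_lm:
  assumes injr: "inj_on fr {..<K}" and injc: "inj_on fc {..<K}"
    and rr: "fr ` {..<K} \<subseteq> {..<dim_row A}" and rc: "fc ` {..<K} \<subseteq> {..<dim_col A}"
  shows "det (lm A K fr fc) = det (submatrix A (fr`{..<K}) (fc`{..<K})) \<or>
         det (lm A K fr fc) = - det (submatrix A (fr`{..<K}) (fc`{..<K}))"
proof -
  define I where "I = fr ` {..<K}"
  define J where "J = fc ` {..<K}"
  define p where "p = (\<lambda>i. if i < K then card {x\<in>I. x < fr i} else i)"
  define q where "q = (\<lambda>i. if i < K then card {x\<in>J. x < fc i} else i)"
  note P = pos_perm[OF injr, folded I_def p_def]
  note Q = pos_perm[OF injc, folded J_def q_def]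
  have e1: "{i. i < dim_row A \<and> i \<in> I} = I" using rr I_def by auto
  have e2: "{i. i < dim_col A \<and> i \<in> J} = J" using rc J_def by auto
  have cI: "card I = K" unfolding I_def using card_image[OF injr] by simp
  have cJ: "card J = K" unfolding J_def using card_image[OF injc] by simp
  define S where "S = submatrix A I J"
  have S: "S \<in> carrier_mat K K" unfolding S_def submatrix_def e1 e2 cI cJ by simp
  have Pp: "p permutes {0..<K}" unfolding p_def by (rule P(1))
  have Qp: "q permutes {0..<K}" unfolding q_def by (rule Q(1))
  have pl: "p i < K" if "i < K" for i using permutes_in_image[OF Pp, of i] that by simp
  have ql: "q i < K" if "i < K" for i using permutes_in_image[OF Qp, of i] that by simp
  define T where "T = mat K K (\<lambda>(i,j). S $$ (i, q j))"
  have T: "T \<in> carrier_mat K K" by (simp add: T_def)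
  have lmeq: "lm A K fr fc = mat K K (\<lambda>(i,j). T $$ (p i, j))"
  proof (rule eq_matI)
    fix i j assume "i < dim_row (mat K K (\<lambda>(i,j). T $$ (p i, j)))" "j < dim_col (mat K K (\<lambda>(i,j). T $$ (p i, j)))"
    then have ij: "i < K" "j < K" by auto
    have "T $$ (p i, j) = S $$ (p i, q j)" using pl ql ij T_def by simp
    also have "\<dots> = A $$ (pick I (p i), pick J (q j))" unfolding S_def
      by (rule submatrix_index, simp_all add: e1 e2 cI cJ pl ql ij)
    also have "\<dots> = A $$ (fr i, fc j)" using P(2) Q(2) ij by (simp add: p_def q_def)
    finally show "lm A K fr fc $$ (i, j) = mat K K (\<lambda>(i,j). T $$ (p i, j)) $$ (i, j)" using ij by simp
  qed auto
  have d1: "det (lm A K fr fc) = signof p * det T" unfolding lmeq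
    by (rule det_permute_rows[OF T Pp])
  have Teq: "T = transpose_mat (mat K K (\<lambda>(i,j). transpose_mat S $$ (q i, j)))"
    by (rule eq_matI, insert S ql, auto simp: T_def)
  have "det T = det (mat K K (\<lambda>(i,j). transpose_mat S $$ (q i, j)))"
    unfolding Teq by (intro det_transpose[of _ K], simp)
  also have "\<dots> = signof q * det (transpose_mat S)"
    by (rule det_permute_rows[OF _ Qp], insert S, auto)
  also have "\<dots> = signof q * det S" using det_transpose[OF S] by simp
  finally have "det (lm A K fr fc) = signof p * signof q * det S" using d1 by simp
  then show ?thesis unfolding S_def I_def J_def by (auto simp: sign_def)
qed

lemma lm_cong: "(\<And>i. i < K \<Longrightarrow> fr i = fr' i) \<Longrightarrow> (\<And>j. j < K \<Longrightarrow> fc j = fc' j) \<Longrightarrow> lm A K fr fc = lm A K fr' fc'"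
  unfolding lm_def by (rule eq_matI) auto

lemma lm_delete: "mat_delete (lm A (Suc K) fr fc) i j = lm A K (\<lambda>t. fr (insert_index i t)) (\<lambda>t. fc (insert_index j t))"
  unfolding mat_delete_def lm_def insert_index_def by (rule eq_matI) auto

lemma lm_expand_row:
  assumes "i < Suc K"
  shows "det (lm A (Suc K) fr fc) = (\<Sum>j<Suc K. A $$ (fr i, fc j) * ((-1)^(i+j) * det (lm A K (\<lambda>t. fr (insert_index i t)) (\<lambda>t. fc (insert_index j t)))))"
  by (subst laplace_expansion_row[OF lm_carrier assms]) (simp add: cofactor_def lm_delete assms)

lemma lm_expand_col:
  assumes "j < Suc K"
  shows "det (lm A (Suc K) fr fc) = (\<Sum>i<Suc K. A $$ (fr i, fc j) * ((-1)^(i+j) * det (lm A K (\<lambda>t. fr (insert_index i t)) (\<lambda>t. fc (insert_index j t)))))"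
  by (subst laplace_expansion_column[OF lm_carrier assms]) (simp add: cofactor_def lm_delete assms)

lemma det_lm1: "det (lm A (Suc 0) fr fc) = A $$ (fr 0, fc 0)"
  by (subst det_single) auto

lemma det_lm1': "det (lm A 1 fr fc) = A $$ (fr 0, fc 0)"
  using det_lm1 by simp

lemma det_lm2: "det (lm A 2 fr fc) = A $$ (fr 0, fc 0) * A $$ (fr 1, fc 1) - A $$ (fr 0, fc 1) * A $$ (fr 1, fc 0)"
  using lm_expand_row[of 0 1 A fr fc] by (simp add: det_lm1 insert_index_def numeral_2_eq_2)

lemma TU_lm:
  assumes "totally_unimodular A" "inj_on fr {..<K}" "inj_on fc {..<K}"
    "fr ` {..<K} \<subseteq> {..<dim_row A}" "fc ` {..<K} \<subseteq> {..<dim_col A}"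
  shows "det (lm A K fr fc) \<in> {-1,0,1}"
proof -
  have "card (fr ` {..<K}) = card (fc ` {..<K})" using assms(2,3) by (simp add: card_image)
  then have "det (submatrix A (fr`{..<K}) (fc`{..<K})) \<in> {-1,0,1}"
    using assms(1,4,5) unfolding totally_unimodular_def by blast
  then show ?thesis using det_lm[OF assms(2-5)] by auto
qed

lemma TU_entry:
  assumes "totally_unimodular A" "i < dim_row A" "j < dim_col A"
  shows "A $$ (i,j) \<in> {-1,0,1}"
proof -
  have "det (lm A 1 (\<lambda>_. i) (\<lambda>_. j)) \<in> {-1,0,1}"
    by (rule TU_lm[OF assms(1)], insert assms, auto simp: inj_on_def)
  then show ?thesis by (simp add: det_lm1)
qed

lemma TU_2x2:
  assumes "totally_unimodular A" "i < dim_row A" "i' < dim_row A" "j < dim_col A" "j' < dim_col A"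
    "A $$ (i,j) \<noteq> 0" "A $$ (i',j) \<noteq> 0" "A $$ (i,j') \<noteq> 0" "A $$ (i',j') \<noteq> 0"
  shows "A $$ (i,j) * A $$ (i',j') = A $$ (i',j) * A $$ (i,j')"
proof (cases "i = i' \<or> j = j'")
  case True then show ?thesis by auto
next
  case False
  define fr where "fr = (\<lambda>t::nat. if t = 0 then i else i')"
  define fc where "fc = (\<lambda>t::nat. if t = 0 then j else j')"
  have "inj_on fr {..<2}" "inj_on fc {..<2}" using False unfolding fr_def fc_def inj_on_def by auto
  moreover have "fr ` {..<2} \<subseteq> {..<dim_row A}" "fc ` {..<2} \<subseteq> {..<dim_col A}"
    using assms unfolding fr_def fc_def by auto
  ultimately have d: "det (lm A 2 fr fc) \<in> {-1,0,1}" using TU_lm[OF assms(1)] by blast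
  have "det (lm A 2 fr fc) = A $$ (i,j) * A $$ (i',j') - A $$ (i,j') * A $$ (i',j)"
    by (simp add: det_lm2 fr_def fc_def)
  moreover have "A $$ (i,j) \<in> {-1,1}" "A $$ (i',j) \<in> {-1,1}" "A $$ (i,j') \<in> {-1,1}" "A $$ (i',j') \<in> {-1,1}"
    using TU_entry[OF assms(1)] assms by fastforce+
  ultimately show ?thesis using d by auto
qed

lemma steinitz:
  fixes \<alpha> :: "'y \<Rightarrow> 'l \<Rightarrow> real"
  assumes "finite L" "finite Y" "card L < card Y"
  shows "\<exists>c. (\<forall>l\<in>L. (\<Sum>y\<in>Y. c y * \<alpha> y l) = 0) \<and> (\<exists>y\<in>Y. c y \<noteq> 0)"
  using assms
proof (induction L arbitrary: Y \<alpha> rule: finite_induct)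
  case empty
  then have "Y \<noteq> {}" by auto
  then show ?case by (intro exI[of _ "\<lambda>_. 1"]) auto
next
  case (insert l0 L)
  show ?case
  proof (cases "\<forall>y\<in>Y. \<alpha> y l0 = 0")
    case True
    from insert.prems insert.hyps have "card L < card Y" by simp
    from insert.IH[OF insert.prems(1) this, of \<alpha>] obtain c where
      c: "\<forall>l\<in>L. (\<Sum>y\<in>Y. c y * \<alpha> y l) = 0" "\<exists>y\<in>Y. c y \<noteq> 0" by blast
    have "(\<Sum>y\<in>Y. c y * \<alpha> y l0) = 0" using True by simp
    then show ?thesis using c by auto
  next
    case False
    then obtain y0 where y0: "y0 \<in> Y" "\<alpha> y0 l0 \<noteq> 0" by auto
    define Y' where "Y' = Y - {y0}"
    define a where "a = \<alpha> y0 l0"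
    define \<alpha>' where "\<alpha>' = (\<lambda>y l. \<alpha> y l - \<alpha> y l0 / a * \<alpha> y0 l)"
    have fY': "finite Y'" using insert.prems Y'_def by simp
    have "card Y' = card Y - 1" using Y'_def y0 insert.prems by simp
    then have "card L < card Y'" using insert.prems insert.hyps by simp
    from insert.IH[OF fY' this, of \<alpha>'] obtain c' where
      c': "\<forall>l\<in>L. (\<Sum>y\<in>Y'. c' y * \<alpha>' y l) = 0" "\<exists>y\<in>Y'. c' y \<noteq> 0" by blast
    define S where "S = (\<Sum>y\<in>Y'. c' y * \<alpha> y l0)"
    define c where "c = (\<lambda>y. if y = y0 then - S / a else c' y)"
    have sY: "(\<Sum>y\<in>Y. c y * \<alpha> y l) = c y0 * \<alpha> y0 l + (\<Sum>y\<in>Y'. c' y * \<alpha> y l)" for l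
    proof -
      have "(\<Sum>y\<in>Y. c y * \<alpha> y l) = c y0 * \<alpha> y0 l + (\<Sum>y\<in>Y'. c y * \<alpha> y l)"
        unfolding Y'_def using y0 insert.prems(1) by (simp add: sum.remove)
      also have "(\<Sum>y\<in>Y'. c y * \<alpha> y l) = (\<Sum>y\<in>Y'. c' y * \<alpha> y l)"
        by (rule sum.cong) (auto simp: c_def Y'_def)
      finally show ?thesis .
    qed
    have a0: "a \<noteq> 0" using y0 a_def by simp
    have "(\<Sum>y\<in>Y. c y * \<alpha> y l) = 0" if "l \<in> insert l0 L" for l
    proof (cases "l = l0")
      case True
      then show ?thesis using sY[of l0] a0 by (simp add: c_def S_def a_def)
    next
      case False
      then have lL: "l \<in> L" using that by simp
      have "(\<Sum>y\<in>Y'. c' y * \<alpha> y l) = (\<Sum>y\<in>Y'. c' y * \<alpha>' y l + (c' y * \<alpha> y l0) * (\<alpha> y0 l / a))"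
        by (rule sum.cong) (auto simp: \<alpha>'_def algebra_simps)
      also have "\<dots> = (\<Sum>y\<in>Y'. c' y * \<alpha>' y l) + S * (\<alpha> y0 l / a)"
        by (simp add: sum.distrib S_def sum_distrib_right sum_divide_distrib)
      also have "\<dots> = S * (\<alpha> y0 l / a)" using c'(1) lL by simp
      finally show ?thesis using sY[of l] a0 by (simp add: c_def)
    qed
    moreover have "\<exists>y\<in>Y. c y \<noteq> 0" using c'(2) unfolding c_def Y'_def by auto
    ultimately show ?thesis by blast
  qed
qed

lemma indep_card_bound:
  fixes \<alpha> :: "nat \<Rightarrow> 'l \<Rightarrow> real"
  assumes "col_indep B Y" "finite L"
    "\<And>y i. y \<in> Y \<Longrightarrow> i < dim_row B \<Longrightarrow> B $$ (i,y) = (\<Sum>l\<in>L. \<alpha> y l * b l i)"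
  shows "card Y \<le> card L"
proof (rule ccontr)
  assume "\<not> card Y \<le> card L"
  then have lt: "card L < card Y" by simp
  have fY: "finite Y" using assms(1) unfolding col_indep_def using finite_subset by blast
  obtain c where c: "\<forall>l\<in>L. (\<Sum>y\<in>Y. c y * \<alpha> y l) = 0" "\<exists>y\<in>Y. c y \<noteq> 0"
    using steinitz[OF assms(2) fY lt, of \<alpha>] by blast
  have "(\<Sum>j\<in>Y. c j * B $$ (i,j)) = 0" if "i < dim_row B" for i
  proof -
    have "(\<Sum>j\<in>Y. c j * B $$ (i,j)) = (\<Sum>j\<in>Y. \<Sum>l\<in>L. c j * (\<alpha> j l * b l i))"
      using assms(3) that by (simp add: sum_distrib_left)
    also have "\<dots> = (\<Sum>l\<in>L. (\<Sum>j\<in>Y. c j * \<alpha> j l) * b l i)"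
      by (subst sum.swap) (simp add: sum_distrib_right mult.assoc)
    also have "\<dots> = 0" using c(1) by simp
    finally show ?thesis .
  qed
  then have "\<forall>j\<in>Y. c j = 0" using assms(1) unfolding col_indep_def by blast
  then show False using c(2) by auto
qed

lemma col_rank_le:
  assumes "finite X" "\<And>Y. Y \<subseteq> X \<Longrightarrow> col_indep B Y \<Longrightarrow> card Y \<le> d"
  shows "col_rank B X \<le> d"
proof -
  have fin: "finite {card Y | Y. Y \<subseteq> X \<and> col_indep B Y}"
  proof -
    have "{card Y | Y. Y \<subseteq> X \<and> col_indep B Y} \<subseteq> card ` Pow X" by auto
    then show ?thesis using assms(1) finite_subset by blast
  qed
  have "col_indep B {}" unfolding col_indep_def by simp
  then have ne: "{card Y | Y. Y \<subseteq> X \<and> col_indep B Y} \<noteq> {}" by blast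
  show ?thesis unfolding col_rank_def using Max_le_iff[OF fin ne] assms(2) by blast
qed

lemma col_rank_ge:
  assumes "finite X" "Y \<subseteq> X" "col_indep B Y"
  shows "card Y \<le> col_rank B X"
proof -
  have "{card Y | Y. Y \<subseteq> X \<and> col_indep B Y} \<subseteq> card ` Pow X" by auto
  then have fin: "finite {card Y | Y. Y \<subseteq> X \<and> col_indep B Y}" using assms(1) finite_subset by blast
  show ?thesis unfolding col_rank_def by (rule Max_ge[OF fin]) (use assms in blast)
qed




locale blk =
  fixes N :: "real mat" and m n :: nat and R C :: "nat set"
  assumes carrier: "N \<in> carrier_mat m n"
    and TU: "totally_unimodular N"
    and Rsub: "R \<subseteq> {..<m}" and Csub: "C \<subseteq> {..<n}"
    and Rcard: "2 \<le> card R" and Ccard: "2 \<le> card C"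
    and nz: "\<And>i j. i \<in> R \<Longrightarrow> j \<in> C \<Longrightarrow> N $$ (i,j) \<noteq> 0"
    and maxR: "\<And>i. i < m \<Longrightarrow> i \<notin> R \<Longrightarrow> \<exists>j\<in>C. N $$ (i,j) = 0"
    and maxC: "\<And>j. j < n \<Longrightarrow> j \<notin> C \<Longrightarrow> \<exists>i\<in>R. N $$ (i,j) = 0"
begin

definition "R1 = {i. i < m \<and> i \<notin> R \<and> (\<exists>j\<in>C. N $$ (i,j) \<noteq> 0)}"
definition "R0 = {i. i < m \<and> i \<notin> R \<and> (\<forall>j\<in>C. N $$ (i,j) = 0)}"
definition "C1 = {j. j < n \<and> j \<notin> C \<and> (\<exists>i\<in>R. N $$ (i,j) \<noteq> 0)}"
definition "C0 = {j. j < n \<and> j \<notin> C \<and> (\<forall>i\<in>R. N $$ (i,j) = 0)}"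

inductive rr :: "nat \<Rightarrow> bool" and rc :: "nat \<Rightarrow> bool" where
  rr_base: "i \<in> R1 \<Longrightarrow> rr i"
| rr_step: "rc j \<Longrightarrow> i \<in> R0 \<Longrightarrow> N $$ (i,j) \<noteq> 0 \<Longrightarrow> rr i"
| rc_step: "rr i \<Longrightarrow> j \<in> C0 \<Longrightarrow> N $$ (i,j) \<noteq> 0 \<Longrightarrow> rc j"

lemma rr_rc_props: "rr i \<Longrightarrow> i \<in> R1 \<union> R0" "rc j \<Longrightarrow> j \<in> C0"
  by (induct rule: rr_rc.inducts) auto

lemma rr_props: "rr i \<Longrightarrow> i < m \<and> i \<notin> R"
  using rr_rc_props unfolding R1_def R0_def by blast

lemma rc_C0: "rc j \<Longrightarrow> j \<in> C0"
  using rr_rc_props by blast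

definition "bad \<longleftrightarrow> (\<exists>i j. rr i \<and> j \<in> C1 \<and> N $$ (i,j) \<noteq> 0)"

lemma dimN[simp]: "dim_row N = m" "dim_col N = n" using carrier by auto

lemma nsep_facts:
  assumes nb: "\<not> bad"
  shows "\<And>i j. rr i \<Longrightarrow> j < n \<Longrightarrow> j \<notin> C \<Longrightarrow> \<not> rc j \<Longrightarrow> N $$ (i,j) = 0"
    and "\<And>i j. i < m \<Longrightarrow> \<not> rr i \<Longrightarrow> i \<notin> R \<Longrightarrow> (j \<in> C \<or> rc j) \<Longrightarrow> N $$ (i,j) = 0"
    and "\<And>i j. i \<in> R \<Longrightarrow> rc j \<Longrightarrow> N $$ (i,j) = 0"
proof -
  fix i j assume a: "rr i" "j < n" "j \<notin> C" "\<not> rc j"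
  show "N $$ (i,j) = 0"
  proof (rule ccontr)
    assume ne: "N $$ (i,j) \<noteq> 0"
    show False
    proof (cases "\<forall>i\<in>R. N $$ (i,j) = 0")
      case True
      then have "j \<in> C0" using a unfolding C0_def by auto
      then show False using rc_step[OF a(1) _ ne] a(4) by blast
    next
      case False
      then have "j \<in> C1" using a unfolding C1_def by auto
      then show False using nb a(1) ne unfolding bad_def by blast
    qed
  qed
next
  fix i j assume a: "i < m" "\<not> rr i" "i \<notin> R" "j \<in> C \<or> rc j"
  have "i \<notin> R1" using a(2) rr_base by blast
  then have iR0: "i \<in> R0" using a(1,3) unfolding R1_def R0_def by auto
  show "N $$ (i,j) = 0"
  proof (cases "j \<in> C")
    case True then show ?thesis using iR0 unfolding R0_def by auto
  next
    case False
    then have "rc j" using a(4) by auto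
    then show ?thesis using rr_step[OF _ iR0] a(2) by blast
  qed
next
  fix i j assume "i \<in> R" "rc j"
  then show "N $$ (i,j) = 0" using rc_C0 unfolding C0_def by auto
qed

lemma sum_delta_mult: "finite S \<Longrightarrow> (\<Sum>l\<in>S. f l * (if i = l then 1 else (0::real))) = (if i \<in> S then f i else 0)"
proof -
  assume "finite S"
  have "(\<Sum>l\<in>S. f l * (if i = l then 1 else (0::real))) = (\<Sum>l\<in>S. if i = l then f l else 0)"
    by (rule sum.cong) auto
  also have "\<dots> = (if i \<in> S then f i else 0)" using \<open>finite S\<close> by (simp add: sum.delta)
  finally show ?thesis .
qed

lemma id_append_dims[simp]: "dim_row (id_append N) = m" "dim_col (id_append N) = m + n"
  by (simp_all add: id_append_def)

lemma id_append_idx: "i < m \<Longrightarrow> y < m + n \<Longrightarrow> id_append N $$ (i,y) =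
   (if y < m then (if i = y then 1 else 0) else N $$ (i, y - m))"
  by (simp add: id_append_def)

lemma not_bad_sep:
  assumes nb: "\<not> bad"
  shows "\<not> matroid_connected 3 (id_append N)"
proof -
  define B where "B = id_append N"
  obtain a0 where a0: "a0 \<in> R" using Rcard by (metis card.empty ex_in_conv not_numeral_le_zero)
  obtain c0 where c0: "c0 \<in> C" using Ccard by (metis card.empty ex_in_conv not_numeral_le_zero)
  have rank1: "N $$ (i,j) = N $$ (a0,j) / N $$ (a0,c0) * N $$ (i,c0)" if "i \<in> R" "j \<in> C" for i j
  proof -
    have "N $$ (i,j) * N $$ (a0,c0) = N $$ (a0,j) * N $$ (i,c0)"
      by (rule TU_2x2[OF TU]) (use that a0 c0 Rsub Csub nz in auto)
    then show ?thesis using nz[OF a0 c0] by (simp add: field_simps)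
  qed
  define Rx where "Rx = {i. rr i}"
  define Cx where "Cx = C \<union> {j. rc j}"
  define X where "X = Rx \<union> (\<lambda>j. m + j) ` Cx"
  define E where "E = {..<m+n}"
  have RxS: "Rx \<subseteq> {..<m}" using rr_props Rx_def by auto
  have finRx: "finite Rx" using RxS finite_subset by blast
  have RxR: "Rx \<inter> R = {}" using rr_props Rx_def by auto
  have CxS: "Cx \<subseteq> {..<n}" using Csub rc_C0 unfolding Cx_def C0_def by auto
  have XE: "X \<subseteq> E" using RxS CxS unfolding X_def E_def by auto
  have finE: "finite E" unfolding E_def by simp
  have EX: "y \<in> E - X \<longleftrightarrow> (y < m \<and> y \<notin> Rx) \<or> (m \<le> y \<and> y - m < n \<and> y - m \<notin> Cx)" for y
    unfolding E_def X_def using RxS by force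
  define \<alpha>1 where "\<alpha>1 = (\<lambda>y l. if y < m then (if l = y then 1 else 0) else
       (if l < m then N $$ (l, y - m) else (if y - m \<in> C then N $$ (a0, y - m) / N $$ (a0,c0) else (0::real))))"
  define b1 where "b1 = (\<lambda>l i. if l < m then (if i = l then 1 else 0) else (if i \<in> R then N $$ (i,c0) else (0::real)))"
  have rX: "col_rank B X \<le> card Rx + 1"
  proof (rule col_rank_le)
    show "finite X" using XE finE finite_subset by blast
    fix Y assume Y: "Y \<subseteq> X" "col_indep B Y"
    have "card Y \<le> card (insert m Rx)"
    proof (rule indep_card_bound[OF Y(2), of _ \<alpha>1 b1])
      show "finite (insert m Rx)" using finRx by simp
      fix y i assume yi: "y \<in> Y" "i < dim_row B"
      have i: "i < m" using yi B_def by simp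
      have mR: "m \<notin> Rx" using RxS by auto
      have "(\<Sum>l\<in>insert m Rx. \<alpha>1 y l * b1 l i) = \<alpha>1 y m * b1 m i + (\<Sum>l\<in>Rx. \<alpha>1 y l * b1 l i)"
        using mR finRx by simp
      also have "(\<Sum>l\<in>Rx. \<alpha>1 y l * b1 l i) = (\<Sum>l\<in>Rx. \<alpha>1 y l * (if i = l then 1 else 0))"
        by (rule sum.cong) (use RxS in \<open>auto simp: b1_def\<close>)
      also have "\<dots> = (if i \<in> Rx then \<alpha>1 y i else 0)" by (rule sum_delta_mult[OF finRx])
      finally have sumeq: "(\<Sum>l\<in>insert m Rx. \<alpha>1 y l * b1 l i) = \<alpha>1 y m * b1 m i + (if i \<in> Rx then \<alpha>1 y i else 0)" .
      have yX: "y \<in> X" using yi Y by auto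
      show "B $$ (i,y) = (\<Sum>l\<in>insert m Rx. \<alpha>1 y l * b1 l i)"
      proof (cases "y < m")
        case True
        then have "y \<in> Rx" using yX unfolding X_def by auto
        then show ?thesis unfolding sumeq using True i
          by (auto simp: B_def id_append_idx \<alpha>1_def)
      next
        case False
        then obtain j where j: "y = m + j" "j \<in> Cx" using yX unfolding X_def using RxS by auto
        have jn: "j < n" using j CxS by auto
        have Bv: "B $$ (i,y) = N $$ (i,j)" using i j jn by (simp add: B_def id_append_idx)
        show ?thesis
        proof (cases "i \<in> Rx")
          case True
          then have "i \<notin> R" using RxR by auto
          then show ?thesis unfolding sumeq Bv using True i j by (simp add: \<alpha>1_def b1_def)
        next
          case iRx: False
          show ?thesis
          proof (cases "i \<in> R")
            case True
            show ?thesis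
            proof (cases "j \<in> C")
              case True
              then show ?thesis unfolding sumeq Bv using iRx \<open>i \<in> R\<close> i j rank1[OF \<open>i \<in> R\<close> True]
                by (simp add: \<alpha>1_def b1_def)
            next
              case False
              then have "rc j" using j Cx_def by auto
              then have "N $$ (i,j) = 0" using nsep_facts(3)[OF nb \<open>i \<in> R\<close>] by blast
              then show ?thesis unfolding sumeq Bv using iRx i j False by (simp add: \<alpha>1_def b1_def)
            qed
          next
            case False
            have "N $$ (i,j) = 0" using nsep_facts(2)[OF nb i] iRx False j(2) unfolding Rx_def Cx_def by auto
            then show ?thesis unfolding sumeq Bv using iRx i j False by (simp add: \<alpha>1_def b1_def)
          qed
        qed
      qed
    qed
    then show "card Y \<le> card Rx + 1" using finRx RxS by (auto simp: card_insert_if split: if_splits)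
  qed
  define L2 where "L2 = {..<m} - Rx"
  define \<alpha>2 where "\<alpha>2 = (\<lambda>y l. if y < m then (if l = y then 1 else 0) else N $$ (l, y - m))"
  define b2 where "b2 = (\<lambda>l i::nat. if i = l then 1 else (0::real))"
  have finL2: "finite L2" unfolding L2_def by simp
  have rEX: "col_rank B (E - X) \<le> m - card Rx"
  proof (rule col_rank_le)
    show "finite (E - X)" using finE by simp
    fix Y assume Y: "Y \<subseteq> E - X" "col_indep B Y"
    have "card Y \<le> card L2"
    proof (rule indep_card_bound[OF Y(2) finL2, of \<alpha>2 b2])
      fix y i assume yi: "y \<in> Y" "i < dim_row B"
      have i: "i < m" using yi B_def by simp
      have "(\<Sum>l\<in>L2. \<alpha>2 y l * b2 l i) = (if i \<in> L2 then \<alpha>2 y i else 0)"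
        unfolding b2_def by (rule sum_delta_mult[OF finL2])
      moreover have "y \<in> E - X" using yi Y by auto
      ultimately show "B $$ (i,y) = (\<Sum>l\<in>L2. \<alpha>2 y l * b2 l i)"
      proof (cases "y < m")
        case True
        then show ?thesis using \<open>y \<in> E - X\<close> \<open>(\<Sum>l\<in>L2. \<alpha>2 y l * b2 l i) = _\<close> i
          unfolding EX by (auto simp: B_def id_append_idx \<alpha>2_def L2_def)
      next
        case False
        then have y: "m \<le> y" "y - m < n" "y - m \<notin> Cx" using \<open>y \<in> E - X\<close> unfolding EX by auto
        have Bv: "B $$ (i,y) = N $$ (i, y - m)" using i y False by (simp add: B_def id_append_idx)
        have "i \<in> Rx \<Longrightarrow> N $$ (i, y - m) = 0"
          using nsep_facts(1)[OF nb, of i "y - m"] y unfolding Rx_def Cx_def by auto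
        then show ?thesis unfolding Bv using \<open>(\<Sum>l\<in>L2. \<alpha>2 y l * b2 l i) = _\<close> False i
          by (auto simp: \<alpha>2_def L2_def)
      qed
    qed
    moreover have "card L2 = m - card Rx" unfolding L2_def using RxS finRx by (simp add: card_Diff_subset)
    ultimately show "card Y \<le> m - card Rx" by simp
  qed
  have rE: "m \<le> col_rank B E"
  proof -
    have ind: "col_indep B {..<m}" unfolding col_indep_def
    proof (intro conjI allI impI ballI)
      show "{..<m} \<subseteq> {..<dim_col B}" by (simp add: B_def)
      fix c :: "nat \<Rightarrow> real" and j assume h: "\<forall>i<dim_row B. (\<Sum>j\<in>{..<m}. c j * B $$ (i, j)) = 0" "j \<in> {..<m}"
      have "(\<Sum>l\<in>{..<m}. c l * B $$ (j, l)) = (\<Sum>l\<in>{..<m}. c l * (if j = l then 1 else 0))"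
        by (rule sum.cong) (use h(2) in \<open>auto simp: B_def id_append_idx\<close>)
      also have "\<dots> = c j" using h(2) by (subst sum_delta_mult) auto
      finally show "c j = 0" using h B_def by auto
    qed
    have "card {..<m} \<le> col_rank B E" by (rule col_rank_ge[OF finE _ ind]) (auto simp: E_def)
    then show ?thesis by simp
  qed
  have cardRx: "card Rx \<le> m" using card_mono[OF _ RxS] by simp
  have lam: "int (col_rank B X) + int (col_rank B (E - X)) - int (col_rank B E) < 2"
    using rX rEX rE cardRx by linarith
  have c1: "2 \<le> card X"
  proof -
    have "card ((\<lambda>j. m + j) ` C) = card C" by (rule card_image) auto
    moreover have "(\<lambda>j. m + j) ` C \<subseteq> X" unfolding X_def Cx_def by auto
    moreover have "finite X" using XE finE finite_subset by blast
    ultimately show ?thesis using Ccard card_mono by (metis order_trans)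
  qed
  have c2: "2 \<le> card (E - X)"
  proof -
    have "R \<subseteq> E - X"
    proof
      fix y assume "y \<in> R"
      then show "y \<in> E - X" unfolding EX using Rsub RxR by auto
    qed
    then show ?thesis using Rcard card_mono[of "E - X" R] finE by simp
  qed
  have "k_separation B 2 X" unfolding k_separation_def Let_def
    using XE c1 c2 lam by (simp add: B_def E_def)
  then show ?thesis unfolding matroid_connected_def B_def
    by (intro notI) (metis le_add2 numeral_2_eq_2 one_add_one less_numeral_extra(4) numeral_3_eq_3 lessI le_numeral_extra(4) order_refl Suc_le_eq one_less_numeral_iff semiring_norm(76) le_add1 add_2_eq_Suc)
qed

end



context blk begin

definition PW :: "nat \<Rightarrow> (nat\<Rightarrow>nat) \<Rightarrow> (nat\<Rightarrow>nat) \<Rightarrow> bool" where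
 "PW k r s \<longleftrightarrow> r 0 \<in> R1 \<and> (\<forall>t. 0 < t \<and> t \<le> k \<longrightarrow> r t \<in> R0) \<and>
    (\<forall>t<k. s t \<in> C0 \<and> N $$ (r t, s t) \<noteq> 0 \<and> N $$ (r (Suc t), s t) \<noteq> 0)"

lemma rr_rc_walk: "rr i \<Longrightarrow> \<exists>k r s. PW k r s \<and> r k = i" "rc j \<Longrightarrow> \<exists>k r s. PW k r s \<and> N $$ (r k, j) \<noteq> 0"
proof (induct rule: rr_rc.inducts)
  case (rr_base i)
  then show ?case by (intro exI[of _ 0] exI[of _ "\<lambda>_. i"]) (auto simp: PW_def)
next
  case (rr_step j i)
  then obtain k r s where w: "PW k r s" "N $$ (r k, j) \<noteq> 0" by blast
  define r' where "r' = r(Suc k := i)"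
  define s' where "s' = s(k := j)"
  have "PW (Suc k) r' s'" unfolding PW_def
  proof (intro conjI allI impI)
    show "r' 0 \<in> R1" using w unfolding r'_def PW_def by simp
  next
    fix t assume "0 < t \<and> t \<le> Suc k"
    then show "r' t \<in> R0" using w rr_step unfolding r'_def PW_def by (cases "t = Suc k") auto
  next
    fix t assume t: "t < Suc k"
    show "s' t \<in> C0" using w t rc_C0[OF rr_step(1)] unfolding s'_def PW_def by (cases "t = k") auto
    show "N $$ (r' t, s' t) \<noteq> 0" using w t unfolding s'_def r'_def PW_def by (cases "t = k") auto
    show "N $$ (r' (Suc t), s' t) \<noteq> 0" using w t rr_step unfolding s'_def r'_def PW_def by (cases "t = k") auto
  qed
  moreover have "r' (Suc k) = i" unfolding r'_def by simp
  ultimately show ?case by blast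
next
  case (rc_step i j)
  then show ?case by blast
qed

definition FW :: "nat \<Rightarrow> (nat\<Rightarrow>nat) \<Rightarrow> (nat\<Rightarrow>nat) \<Rightarrow> bool" where
 "FW K r s \<longleftrightarrow> 0 < K \<and> r 0 \<in> R1 \<and> (\<forall>t. 0 < t \<and> t < K \<longrightarrow> r t \<in> R0) \<and>
    (\<forall>t. Suc t < K \<longrightarrow> s t \<in> C0) \<and> s (K - 1) \<in> C1 \<and>
    (\<forall>t<K. N $$ (r t, s t) \<noteq> 0) \<and> (\<forall>t. Suc t < K \<longrightarrow> N $$ (r (Suc t), s t) \<noteq> 0)"

lemma bad_FW: assumes "bad" shows "\<exists>K r s. FW K r s"
proof -
  obtain i g where ig: "rr i" "g \<in> C1" "N $$ (i,g) \<noteq> 0" using assms bad_def by blast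
  obtain k r s where w: "PW k r s" "r k = i" using rr_rc_walk(1)[OF ig(1)] by blast
  have "FW (Suc k) r (s(k := g))" unfolding FW_def
  proof (intro conjI allI impI)
    fix t assume t: "t < Suc k"
    show "N $$ (r t, (s(k := g)) t) \<noteq> 0" using w ig t unfolding PW_def by (cases "t = k") auto
  qed (use w ig in \<open>auto simp: PW_def\<close>)
  then show ?thesis by blast
qed

lemma FW_shorten:
  assumes w: "FW K r s" and ij: "i < K" "j < K" "j \<noteq> i" "Suc j \<noteq> i" and e: "N $$ (r i, s j) \<noteq> 0"
  shows "\<exists>K' r' s'. K' < K \<and> FW K' r' s'"
proof (cases "i < j")
  case True
  define d where "d = j - i"
  define K' where "K' = K - d"
  define r' where "r' = (\<lambda>t. if t \<le> i then r t else r (t + d))"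
  define s' where "s' = (\<lambda>t. if t < i then s t else s (t + d))"
  have "FW K' r' s'" unfolding FW_def
  proof (intro conjI allI impI)
    show "0 < K'" using True ij unfolding K'_def d_def by simp
    show "r' 0 \<in> R1" using w unfolding FW_def r'_def by simp
    fix t
    show "0 < t \<and> t < K' \<Longrightarrow> r' t \<in> R0" using w True ij unfolding FW_def r'_def K'_def d_def by auto
    show "Suc t < K' \<Longrightarrow> s' t \<in> C0" using w True ij unfolding FW_def s'_def K'_def d_def by auto
    show "t < K' \<Longrightarrow> N $$ (r' t, s' t) \<noteq> 0"
      using w True ij e unfolding FW_def r'_def s'_def K'_def d_def
      by (cases "t < i"; cases "t = i") auto
    show "Suc t < K' \<Longrightarrow> N $$ (r' (Suc t), s' t) \<noteq> 0"
      using w True ij unfolding FW_def r'_def s'_def K'_def d_def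
      by (cases "t < i") auto
  next
    have "s' (K' - 1) = s (K - 1)" using True ij unfolding s'_def K'_def d_def by auto
    then show "s' (K' - 1) \<in> C1" using w unfolding FW_def by simp
  qed
  moreover have "K' < K" using True ij unfolding K'_def d_def by simp
  ultimately show ?thesis by blast
next
  case False
  then have ji: "Suc j < i" using ij by simp
  define d where "d = i - Suc j"
  define K' where "K' = K - d"
  define r' where "r' = (\<lambda>t. if t \<le> j then r t else r (t + d))"
  define s' where "s' = (\<lambda>t. if t \<le> j then s t else s (t + d))"
  have "FW K' r' s'" unfolding FW_def
  proof (intro conjI allI impI)
    show "0 < K'" using ji ij unfolding K'_def d_def by simp
    show "r' 0 \<in> R1" using w unfolding FW_def r'_def by simp
    fix t
    show "0 < t \<and> t < K' \<Longrightarrow> r' t \<in> R0" using w ji ij unfolding FW_def r'_def K'_def d_def by auto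
    show "Suc t < K' \<Longrightarrow> s' t \<in> C0" using w ji ij unfolding FW_def s'_def K'_def d_def by auto
    show "t < K' \<Longrightarrow> N $$ (r' t, s' t) \<noteq> 0"
      using w ji ij unfolding FW_def r'_def s'_def K'_def d_def by auto
    show "Suc t < K' \<Longrightarrow> N $$ (r' (Suc t), s' t) \<noteq> 0"
      using w ji ij e unfolding FW_def r'_def s'_def K'_def d_def
      by (cases "t < j"; cases "t = j") auto
  next
    have "s' (K' - 1) = s (K - 1)" using ji ij unfolding s'_def K'_def d_def by auto
    then show "s' (K' - 1) \<in> C1" using w unfolding FW_def by simp
  qed
  moreover have "K' < K" using ji ij unfolding K'_def d_def by simp
  ultimately show ?thesis by blast
qed

lemma min_FW:
  assumes "bad"
  shows "\<exists>K r s. FW K r s \<and> (\<forall>i<K. \<forall>j<K. j \<noteq> i \<longrightarrow> Suc j \<noteq> i \<longrightarrow> N $$ (r i, s j) = 0)"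
proof -
  have ex: "\<exists>K. \<exists>r s. FW K r s" using bad_FW[OF assms] by blast
  obtain K where K: "\<exists>r s. FW K r s" and least: "\<And>K'. K' < K \<Longrightarrow> \<not> (\<exists>r s. FW K' r s)"
    using ex_has_least_nat[of "\<lambda>K. \<exists>r s. FW K r s" _ id] ex by (metis id_apply not_less)
  obtain r s where w: "FW K r s" using K by blast
  have "\<forall>i<K. \<forall>j<K. j \<noteq> i \<longrightarrow> Suc j \<noteq> i \<longrightarrow> N $$ (r i, s j) = 0"
    using FW_shorten[OF w] least by blast
  then show ?thesis using w by blast
qed

end



lemma sum_single: "j0 < (n::nat) \<Longrightarrow> (\<And>j. j < n \<Longrightarrow> j \<noteq> j0 \<Longrightarrow> f j = 0) \<Longrightarrow> (\<Sum>j<n. f j) = (f j0 :: real)"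
  by (subst sum.remove[of _ j0]) (auto intro!: sum.neutral)

lemma sum_two: "j0 < (n::nat) \<Longrightarrow> j1 < n \<Longrightarrow> j0 \<noteq> j1 \<Longrightarrow> (\<And>j. j < n \<Longrightarrow> j \<noteq> j0 \<Longrightarrow> j \<noteq> j1 \<Longrightarrow> f j = 0) \<Longrightarrow> (\<Sum>j<n. f j) = f j0 + (f j1 :: real)"
proof -
  assume h: "j0 < n" "j1 < n" "j0 \<noteq> j1" "\<And>j. j < n \<Longrightarrow> j \<noteq> j0 \<Longrightarrow> j \<noteq> j1 \<Longrightarrow> f j = 0"
  have "(\<Sum>j<n. f j) = f j0 + (\<Sum>j\<in>{..<n}-{j0}. f j)" by (rule sum.remove) (use h in auto)
  also have "(\<Sum>j\<in>{..<n}-{j0}. f j) = f j1 + (\<Sum>j\<in>{..<n}-{j0}-{j1}. f j)" by (rule sum.remove) (use h in auto)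
  also have "(\<Sum>j\<in>{..<n}-{j0}-{j1}. f j) = 0" by (rule sum.neutral) (use h in auto)
  finally show ?thesis by simp
qed

lemma prod_pm1: "\<forall>x\<in>set xs. x \<in> {1, -1::real} \<Longrightarrow> prod_list xs \<in> {1, -1}"
  by (induction xs) auto

lemma pow_m1: "(-1::real)^K = 1 \<or> (-1::real)^K = -1"
  by (cases "even K") auto

lemma zero_entry_idx: "k < dim_row A \<Longrightarrow> l < dim_col A \<Longrightarrow> zero_entry A i j $$ (k,l) = (if (k,l) = (i,j) then 0 else A $$ (k,l))"
  by (simp add: zero_entry_def)

lemma zero_entry_dims[simp]: "dim_row (zero_entry A i j) = dim_row A" "dim_col (zero_entry A i j) = dim_col A"
  by (simp_all add: zero_entry_def)

lemma lm_zero_entry: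
  assumes "\<And>t. t < K \<Longrightarrow> fr t \<noteq> a" "\<And>t. t < K \<Longrightarrow> fr t < dim_row A" "\<And>t. t < K \<Longrightarrow> fc t < dim_col A"
  shows "lm (zero_entry A a c) K fr fc = lm A K fr fc"
  by (rule eq_matI) (use assms in \<open>auto simp: zero_entry_idx\<close>)

definition shift :: "nat \<Rightarrow> (nat \<Rightarrow> nat) \<Rightarrow> nat \<Rightarrow> nat" where
  "shift x f = (\<lambda>t. if t = 0 then x else f (t - 1))"

lemma shift_0[simp]: "shift x f 0 = x" by (simp add: shift_def)
lemma shift_Suc[simp]: "shift x f (Suc t) = f t" by (simp add: shift_def)
lemma shift_ins0[simp]: "shift x f (insert_index 0 t) = f t" by (simp add: insert_index_def)
lemma ins_lt: "t < j \<Longrightarrow> insert_index j t = t" by (simp add: insert_index_def)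
lemma shift2_ins1[simp]: "shift x (shift y f) (insert_index 1 t) = shift x f t"
  by (cases t) (auto simp: insert_index_def shift_def)

lemma shift2_ins1_fun[simp]: "(\<lambda>t. shift x (shift y f) (insert_index (Suc 0) t)) = shift x f"
  by (rule ext) (metis One_nat_def shift2_ins1)

lemma shift2_ins1_fun'[simp]: "(\<lambda>t. shift x (shift y f) (insert_index 1 t)) = shift x f"
  by (rule ext) (rule shift2_ins1)

lemma inj_shift: "inj_on f {..<K} \<Longrightarrow> x \<notin> f ` {..<K} \<Longrightarrow> inj_on (shift x f) {..<Suc K}"
proof -
  assume inj: "inj_on f {..<K}" and x: "x \<notin> f ` {..<K}"
  show ?thesis
  proof (rule inj_onI)
    fix u v assume uv: "u \<in> {..<Suc K}" "v \<in> {..<Suc K}" "shift x f u = shift x f v"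
    show "u = v"
    proof (cases u)
      case 0
      then show ?thesis using uv x by (cases v) auto
    next
      case (Suc u')
      then show ?thesis using uv x inj by (cases v) (auto dest: inj_onD)
    qed
  qed
qed

lemma shift_image: "shift x f ` {..<Suc K} = insert x (f ` {..<K})"
proof -
  have "shift x f ` {..<Suc K} = shift x f ` (insert 0 (Suc ` {..<K}))"
    by (simp add: lessThan_Suc_eq_insert_0)
  also have "\<dots> = insert x (f ` {..<K})" by (auto simp: image_image)
  finally show ?thesis .
qed

context blk begin

lemma bad_contra:
  assumes "bad" and SU: "strongly_unimodular N"
  shows False
proof -
  obtain K r s where w: "FW K r s" and ch: "\<And>i j. i<K \<Longrightarrow> j<K \<Longrightarrow> j \<noteq> i \<Longrightarrow> Suc j \<noteq> i \<Longrightarrow> N $$ (r i, s j) = 0"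
    using min_FW[OF assms(1)] by blast
  have K0: "0 < K" using w FW_def by simp
  have r0: "r 0 \<in> R1" using w FW_def by simp
  have rR0: "\<And>t. 0 < t \<Longrightarrow> t < K \<Longrightarrow> r t \<in> R0" using w FW_def by simp
  have sC0: "\<And>t. Suc t < K \<Longrightarrow> s t \<in> C0" using w FW_def by simp
  have sK: "s (K - 1) \<in> C1" using w FW_def by simp
  have e1: "\<And>t. t < K \<Longrightarrow> N $$ (r t, s t) \<noteq> 0" using w FW_def by simp
  have e2: "\<And>t. Suc t < K \<Longrightarrow> N $$ (r (Suc t), s t) \<noteq> 0" using w FW_def by simp
  have rS: "\<And>t. t < K \<Longrightarrow> r t < m \<and> r t \<notin> R"
  proof -
    fix t assume t: "t < K"
    show "r t < m \<and> r t \<notin> R"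
    proof (cases "t = 0")
      case True then show ?thesis using r0 unfolding R1_def by simp
    next
      case False then show ?thesis using rR0[of t] t unfolding R0_def by simp
    qed
  qed
  have rz: "\<And>t x. 0 < t \<Longrightarrow> t < K \<Longrightarrow> x \<in> C \<Longrightarrow> N $$ (r t, x) = 0"
    using rR0 unfolding R0_def by blast
  have sS: "\<And>t. t < K \<Longrightarrow> s t < n \<and> s t \<notin> C"
  proof -
    fix t assume t: "t < K"
    show "s t < n \<and> s t \<notin> C"
    proof (cases "Suc t < K")
      case True then show ?thesis using sC0 unfolding C0_def by blast
    next
      case False then have "t = K - 1" using t by simp
      then show ?thesis using sK unfolding C1_def by blast
    qed
  qed
  have sz: "\<And>t x. Suc t < K \<Longrightarrow> x \<in> R \<Longrightarrow> N $$ (x, s t) = 0"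
    using sC0 unfolding C0_def by blast
  have r_inj: "inj_on r {..<K}"
  proof (rule inj_onI, rule ccontr)
    fix i j assume "i \<in> {..<K}" "j \<in> {..<K}" "r i = r j" "i \<noteq> j"
    then have ij: "i < K" "j < K" "r i = r j" "i \<noteq> j" by auto
    show False
    proof (cases "i < j")
      case True
      have "N $$ (r i, s j) \<noteq> 0" using e1[of j] ij by simp
      then show False using ch[of i j] ij True by simp
    next
      case False
      have "N $$ (r j, s i) \<noteq> 0" using e1[of i] ij by simp
      then show False using ch[of j i] ij False by simp
    qed
  qed
  have s_inj: "inj_on s {..<K}"
  proof (rule inj_onI, rule ccontr)
    fix i j assume "i \<in> {..<K}" "j \<in> {..<K}" "s i = s j" "i \<noteq> j"
    then have ij: "i < K" "j < K" "s i = s j" "i \<noteq> j" by auto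
    show False
    proof (cases "i < j")
      case True
      have "N $$ (r i, s j) \<noteq> 0" using e1[of i] ij by simp
      then show False using ch[of i j] ij True by simp
    next
      case False
      have "N $$ (r j, s i) \<noteq> 0" using e1[of j] ij by simp
      then show False using ch[of j i] ij False by simp
    qed
  qed
  define h where "h = r 0"
  define g where "g = s (K - 1)"
  obtain c where c: "c \<in> C" "N $$ (h,c) \<noteq> 0" using r0 unfolding R1_def h_def by blast
  obtain d where d: "d \<in> C" "N $$ (h,d) = 0" using maxR r0 unfolding R1_def h_def by blast
  obtain a where a: "a \<in> R" "N $$ (a,g) \<noteq> 0" using sK unfolding C1_def g_def by blast
  obtain b where b: "b \<in> R" "N $$ (b,g) = 0" using maxC sK unfolding C1_def g_def by blast
  have cd: "c \<noteq> d" using c d by auto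
  have ab: "a \<noteq> b" using a b by auto
  have am: "a < m" "b < m" using a b Rsub by auto
  have cn: "c < n" "d < n" using c d Csub by auto
  have pm: "\<And>i j. i < m \<Longrightarrow> j < n \<Longrightarrow> N $$ (i,j) \<noteq> 0 \<Longrightarrow> N $$ (i,j) \<in> {1,-1}"
    using TU_entry[OF TU] by fastforce
  define L where "L = lm N K r s"
  define c1 where "c1 = (\<lambda>t. if t = 0 then c else s (t - 1))"
  define L' where "L' = lm N K r c1"
  have dL: "det L \<in> {1,-1}"
  proof -
    have "det L = prod_list (diag_mat L)"
      by (rule det_lower_triangular[of K]) (use ch in \<open>auto simp: L_def\<close>)
    moreover have "\<forall>x\<in>set (diag_mat L). x \<in> {1,-1}"
      using pm rS sS e1 by (auto simp: diag_mat_def L_def)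
    ultimately show ?thesis using prod_pm1 by auto
  qed
  have dL': "det L' \<in> {1,-1}"
  proof -
    have "det L' = prod_list (diag_mat L')"
    proof (rule det_upper_triangular[of L' K])
      show "upper_triangular L'" unfolding upper_triangular_def
      proof (intro allI impI)
        fix i j assume ij: "i < dim_row L'" "j < i"
        then have i: "i < K" by (simp add: L'_def)
        show "L' $$ (i,j) = 0"
        proof (cases "j = 0")
          case True then show ?thesis using ij i rz c by (simp add: L'_def c1_def)
        next
          case False then show ?thesis using ij i ch[of i "j - 1"] by (simp add: L'_def c1_def)
        qed
      qed
    qed (simp add: L'_def)
    moreover have "\<forall>x\<in>set (diag_mat L'). x \<in> {1,-1}"
    proof
      fix x assume "x \<in> set (diag_mat L')"
      then obtain t where t: "t < K" "x = N $$ (r t, c1 t)" by (auto simp: diag_mat_def L'_def)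
      show "x \<in> {1,-1}"
      proof (cases "t = 0")
        case True then show ?thesis using t pm c cn rS K0 by (simp add: c1_def h_def)
      next
        case False
        then have "N $$ (r t, s (t-1)) \<noteq> 0" using e2[of "t-1"] t by simp
        then show ?thesis using t pm False rS sS by (simp add: c1_def)
      qed
    qed
    ultimately show ?thesis using prod_pm1 by auto
  qed
  have gK: "s (K - 1) = g" using g_def by simp
  have sK1: "\<And>t. t < K \<Longrightarrow> t \<noteq> K - 1 \<Longrightarrow> Suc t < K" by simp
  have rimg: "r ` {..<K} \<subseteq> {..<m}" "a \<notin> r ` {..<K}" "b \<notin> r ` {..<K}" using rS a b by auto
  have simg: "s ` {..<K} \<subseteq> {..<n}" "c \<notin> s ` {..<K}" "d \<notin> s ` {..<K}" using sS c d by auto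
  have inj1: "inj_on (shift a r) {..<Suc K}" by (rule inj_shift[OF r_inj rimg(2)])
  have injb: "inj_on (shift b r) {..<Suc K}" by (rule inj_shift[OF r_inj rimg(3)])
  have injc1: "inj_on (shift c s) {..<Suc K}" by (rule inj_shift[OF s_inj simg(2)])
  have injd: "inj_on (shift d s) {..<Suc K}" by (rule inj_shift[OF s_inj simg(3)])
  have injab: "inj_on (shift a (shift b r)) {..<Suc (Suc K)}"
    by (rule inj_shift[OF injb]) (use ab rimg in \<open>auto simp: shift_image\<close>)
  have injcd: "inj_on (shift c (shift d s)) {..<Suc (Suc K)}"
    by (rule inj_shift[OF injd]) (use cd simg in \<open>auto simp: shift_image\<close>)
  have mL: "lm N K (\<lambda>t. shift a r (insert_index 0 t)) (\<lambda>t. shift c s (insert_index 0 t)) = L"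
    by (simp add: L_def)
  have mL': "lm N K (\<lambda>t. shift a r (insert_index 0 t)) (\<lambda>t. shift c s (insert_index K t)) = L'"
    unfolding L'_def by (rule lm_cong) (auto simp: ins_lt c1_def shift_def)
  have dC1: "det (lm N (Suc K) (shift a r) (shift c s)) = N $$ (a,c) * det L + N $$ (a,g) * ((-1)^K * det L')"
  proof -
    have "det (lm N (Suc K) (shift a r) (shift c s)) = (\<Sum>j<Suc K. N $$ (shift a r 0, shift c s j) *
       ((-1)^(0+j) * det (lm N K (\<lambda>t. shift a r (insert_index 0 t)) (\<lambda>t. shift c s (insert_index j t)))))"
      by (rule lm_expand_row) simp
    also have "\<dots> = N $$ (shift a r 0, shift c s 0) *
       ((-1)^(0+0) * det (lm N K (\<lambda>t. shift a r (insert_index 0 t)) (\<lambda>t. shift c s (insert_index 0 t)))) +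
       N $$ (shift a r 0, shift c s K) *
       ((-1)^(0+K) * det (lm N K (\<lambda>t. shift a r (insert_index 0 t)) (\<lambda>t. shift c s (insert_index K t))))"
    proof (rule sum_two)
      fix j assume j: "j < Suc K" "j \<noteq> 0" "j \<noteq> K"
      then have "Suc (j - 1) < K" by simp
      then have "N $$ (a, s (j - 1)) = 0" using sz a by blast
      then show "N $$ (shift a r 0, shift c s j) * ((-1)^(0+j) * det (lm N K (\<lambda>t. shift a r (insert_index 0 t)) (\<lambda>t. shift c s (insert_index j t)))) = 0"
        using j by (simp add: shift_def)
    qed (use K0 in auto)
    also have "\<dots> = N $$ (a,c) * det L + N $$ (a,g) * ((-1)^K * det L')"
      unfolding mL mL' using K0 gK by (simp add: shift_def)
    finally show ?thesis .
  qed
  have TUC1: "det (lm N (Suc K) (shift a r) (shift c s)) \<in> {-1,0,1}"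
    by (rule TU_lm[OF TU inj1 injc1]) (use rimg simg am cn in \<open>auto simp: shift_image\<close>)
  have qac: "N $$ (a,c) \<in> {1,-1}" using pm am cn nz a c by blast
  have qad: "N $$ (a,d) \<in> {1,-1}" using pm am cn nz a d by blast
  have qbc: "N $$ (b,c) \<in> {1,-1}" using pm am cn nz b c by blast
  have qbd: "N $$ (b,d) \<in> {1,-1}" using pm am cn nz b d by blast
  have qag: "N $$ (a,g) \<in> {1,-1}" using pm am sS[of "K-1"] K0 a gK by auto
  have sig: "(-1::real)^K \<in> {1,-1}" using pow_m1 by auto
  have cyc: "N $$ (a,c) * det L = - (N $$ (a,g) * ((-1)^K * det L'))"
  proof -
    have "N $$ (a,c) * det L \<in> {1,-1}" using qac dL by auto
    moreover have "N $$ (a,g) * ((-1)^K * det L') \<in> {1,-1}" using qag sig dL' by auto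
    ultimately show ?thesis using TUC1 unfolding dC1 by auto
  qed
  have dM1: "det (lm N (Suc K) (shift b r) (shift c s)) = N $$ (b,c) * det L"
  proof -
    have "det (lm N (Suc K) (shift b r) (shift c s)) = (\<Sum>j<Suc K. N $$ (shift b r 0, shift c s j) *
       ((-1)^(0+j) * det (lm N K (\<lambda>t. shift b r (insert_index 0 t)) (\<lambda>t. shift c s (insert_index j t)))))"
      by (rule lm_expand_row) simp
    also have "\<dots> = N $$ (shift b r 0, shift c s 0) *
       ((-1)^(0+0) * det (lm N K (\<lambda>t. shift b r (insert_index 0 t)) (\<lambda>t. shift c s (insert_index 0 t))))"
    proof (rule sum_single)
      fix j assume j: "j < Suc K" "j \<noteq> 0"
      have "N $$ (b, s (j - 1)) = 0"
      proof (cases "j = K")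
        case True then show ?thesis using b gK by simp
      next
        case False then have "Suc (j - 1) < K" using j by simp
        then show ?thesis using sz b by blast
      qed
      then show "N $$ (shift b r 0, shift c s j) * ((-1)^(0+j) * det (lm N K (\<lambda>t. shift b r (insert_index 0 t)) (\<lambda>t. shift c s (insert_index j t)))) = 0"
        using j by (simp add: shift_def)
    qed simp
    also have "\<dots> = N $$ (b,c) * det L" by (simp add: L_def)
    finally show ?thesis .
  qed
  have dM2: "det (lm N (Suc K) (shift b r) (shift c (shift d s))) = - (N $$ (b,d) * det L')"
  proof -
    have "det (lm N (Suc K) (shift b r) (shift c (shift d s))) = (\<Sum>i<Suc K. N $$ (shift b r i, shift c (shift d s) 1) *
       ((-1)^(i+1) * det (lm N K (\<lambda>t. shift b r (insert_index i t)) (\<lambda>t. shift c (shift d s) (insert_index 1 t)))))"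
      by (rule lm_expand_col) (use K0 in simp)
    also have "\<dots> = N $$ (shift b r 0, shift c (shift d s) 1) *
       ((-1)^(0+1) * det (lm N K (\<lambda>t. shift b r (insert_index 0 t)) (\<lambda>t. shift c (shift d s) (insert_index 1 t))))"
    proof (rule sum_single)
      fix i assume i: "i < Suc K" "i \<noteq> 0"
      have "N $$ (r (i - 1), d) = 0"
      proof (cases "i = 1")
        case True then show ?thesis using d h_def by simp
      next
        case False then show ?thesis using rz[of "i - 1" d] i d by simp
      qed
      then show "N $$ (shift b r i, shift c (shift d s) 1) * ((-1)^(i+1) * det (lm N K (\<lambda>t. shift b r (insert_index i t)) (\<lambda>t. shift c (shift d s) (insert_index 1 t)))) = 0"
        using i by (simp add: shift_def)
    qed simp
    also have "\<dots> = - (N $$ (b,d) * det L')"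
    proof -
      have e: "(\<lambda>t. shift c (shift d s) (insert_index 1 t)) = c1"
        by (rule ext) (simp only: shift2_ins1, simp add: c1_def shift_def)
      have "lm N K (\<lambda>t. shift b r (insert_index 0 t)) (\<lambda>t. shift c (shift d s) (insert_index 1 t)) = L'"
        unfolding e by (simp add: L'_def)
      then show ?thesis by (simp add: shift_def)
    qed
    finally show ?thesis .
  qed
  define N' where "N' = zero_entry N a c"
  have N'dim: "dim_row N' = m" "dim_col N' = n" by (simp_all add: N'_def)
  have z1: "lm N' (Suc K) (shift b r) (shift c s) = lm N (Suc K) (shift b r) (shift c s)"
    unfolding N'_def by (rule lm_zero_entry) (use ab a(1) rS am sS cn in \<open>auto simp: shift_def\<close>)
  have z2: "lm N' (Suc K) (shift b r) (shift c (shift d s)) = lm N (Suc K) (shift b r) (shift c (shift d s))"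
    unfolding N'_def by (rule lm_zero_entry) (use ab a(1) rS am sS cn in \<open>auto simp: shift_def\<close>)
  have mK: "lm N' (Suc K) (\<lambda>t. shift a (shift b r) (insert_index 0 t)) (\<lambda>t. shift c (shift d s) (insert_index (Suc K) t))
      = lm N' (Suc K) (shift b r) (shift c (shift d s))"
    by (rule lm_cong) (auto simp: ins_lt)
  have N'a: "\<And>x. x < n \<Longrightarrow> x \<noteq> c \<Longrightarrow> N' $$ (a, x) = N $$ (a,x)" "N' $$ (a,c) = 0"
    using am cn by (auto simp: N'_def zero_entry_idx)
  have dM: "det (lm N' (Suc (Suc K)) (shift a (shift b r)) (shift c (shift d s))) =
      N $$ (a,d) * ((-1) * (N $$ (b,c) * det L)) + N $$ (a,g) * ((-1)^(Suc K) * (- (N $$ (b,d) * det L')))"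
  proof -
    have "det (lm N' (Suc (Suc K)) (shift a (shift b r)) (shift c (shift d s))) = (\<Sum>j<Suc (Suc K). N' $$ (shift a (shift b r) 0, shift c (shift d s) j) *
       ((-1)^(0+j) * det (lm N' (Suc K) (\<lambda>t. shift a (shift b r) (insert_index 0 t)) (\<lambda>t. shift c (shift d s) (insert_index j t)))))"
      by (rule lm_expand_row) simp
    also have "\<dots> = N' $$ (shift a (shift b r) 0, shift c (shift d s) 1) *
       ((-1)^(0+1) * det (lm N' (Suc K) (\<lambda>t. shift a (shift b r) (insert_index 0 t)) (\<lambda>t. shift c (shift d s) (insert_index 1 t)))) +
       N' $$ (shift a (shift b r) 0, shift c (shift d s) (Suc K)) *
       ((-1)^(0+Suc K) * det (lm N' (Suc K) (\<lambda>t. shift a (shift b r) (insert_index 0 t)) (\<lambda>t. shift c (shift d s) (insert_index (Suc K) t))))"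
    proof (rule sum_two)
      fix j assume j: "j < Suc (Suc K)" "j \<noteq> 1" "j \<noteq> Suc K"
      have "N' $$ (a, shift c (shift d s) j) = 0"
      proof (cases "j = 0")
        case True then show ?thesis using N'a by simp
      next
        case False
        then have j2: "Suc (j - 2) < K" using j by simp
        then have "s (j - 2) < n" "s (j - 2) \<noteq> c" using sS[of "j-2"] c by auto
        then have "N' $$ (a, s (j - 2)) = N $$ (a, s (j - 2))" using N'a by simp
        also have "\<dots> = 0" using sz[OF j2 a(1)] .
        finally show ?thesis using False j by (simp add: shift_def numeral_2_eq_2)
      qed
      then show "N' $$ (shift a (shift b r) 0, shift c (shift d s) j) * ((-1)^(0+j) * det (lm N' (Suc K) (\<lambda>t. shift a (shift b r) (insert_index 0 t)) (\<lambda>t. shift c (shift d s) (insert_index j t)))) = 0"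
        by simp
    qed (use K0 in auto)
    also have "\<dots> = N $$ (a,d) * ((-1) * (N $$ (b,c) * det L)) + N $$ (a,g) * ((-1)^(Suc K) * (- (N $$ (b,d) * det L')))"
    proof -
      have "shift c (shift d s) 1 = d" by (simp add: shift_def)
      moreover have "shift c (shift d s) (Suc K) = g" using K0 gK by (simp add: shift_def)
      moreover have "N' $$ (a,d) = N $$ (a,d)" using N'a cn cd by simp
      moreover have "N' $$ (a,g) = N $$ (a,g)" using N'a sS[of "K-1"] K0 gK c by auto
      moreover have "lm N' (Suc K) (\<lambda>t. shift a (shift b r) (insert_index 0 t)) (\<lambda>t. shift c (shift d s) (insert_index 1 t))
          = lm N (Suc K) (shift b r) (shift c s)" using z1 by simp
      ultimately show ?thesis unfolding mK z2 dM2 by (simp add: z1 dM1)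
    qed
    finally show ?thesis .
  qed
  have q2: "N $$ (a,c) * N $$ (b,d) = N $$ (b,c) * N $$ (a,d)"
    by (rule TU_2x2[OF TU]) (use am cn nz a b c d in auto)
  have "det (lm N' (Suc (Suc K)) (shift a (shift b r)) (shift c (shift d s))) = - 2 * (N $$ (a,c) * N $$ (b,d) * det L)"
  proof -
    have "N $$ (a,g) * ((-1)^(Suc K) * (- (N $$ (b,d) * det L'))) = N $$ (b,d) * (N $$ (a,g) * ((-1)^K * det L'))"
      by simp
    also have "\<dots> = - (N $$ (b,d) * (N $$ (a,c) * det L))" using cyc by simp
    finally have t2: "N $$ (a,g) * ((-1)^(Suc K) * (- (N $$ (b,d) * det L'))) = - (N $$ (a,c) * N $$ (b,d) * det L)"
      by (simp add: algebra_simps)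
    have t1: "N $$ (a,d) * ((-1) * (N $$ (b,c) * det L)) = - (N $$ (a,c) * N $$ (b,d) * det L)"
      using q2 by (simp add: algebra_simps)
    show ?thesis unfolding dM t1 t2 by simp
  qed
  moreover have "N $$ (a,c) * N $$ (b,d) * det L \<in> {1,-1}" using qac qbd dL by auto
  ultimately have bad2: "det (lm N' (Suc (Suc K)) (shift a (shift b r)) (shift c (shift d s))) \<notin> {-1,0,1}" by auto
  have TUN': "totally_unimodular N'"
    using SU qac am cn unfolding strongly_unimodular_def N'_def by auto
  have "det (lm N' (Suc (Suc K)) (shift a (shift b r)) (shift c (shift d s))) \<in> {-1,0,1}"
    by (rule TU_lm[OF TUN' injab injcd]) (use rimg simg am cn N'dim in \<open>auto simp: shift_image\<close>)
  then show False using bad2 by blast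
qed

end



theorem mainTheorem10:
  fixes N :: "real mat" and m n :: nat
  assumes "N \<in> carrier_mat m n" and "m \<ge> 3" and "n \<ge> 3"
    and "totally_unimodular N"
    and "matroid_connected 3 (id_append N)"
    and "\<exists>i1 i2 j1 j2 r1 r2 c1 c2.
           i1 < m \<and> i2 < m \<and> i1 \<noteq> i2 \<and> j1 < n \<and> j2 < n \<and> j1 \<noteq> j2 \<and>
           r1 \<in> {1, -1} \<and> r2 \<in> {1, -1} \<and> c1 \<in> {1, -1} \<and> c2 \<in> {1, -1} \<and>
           N $$ (i1, j1) = r1 * c1 \<and> N $$ (i1, j2) = r1 * c2 \<and>
           N $$ (i2, j1) = r2 * c1 \<and> N $$ (i2, j2) = r2 * c2"
  shows "\<not> strongly_unimodular N"
proof
  assume SU: "strongly_unimodular N"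
  obtain i1 i2 j1 j2 r1 r2 c1 c2 where h:
    "i1 < m" "i2 < m" "i1 \<noteq> i2" "j1 < n" "j2 < n" "j1 \<noteq> j2"
    "r1 \<in> {1, -1}" "r2 \<in> {1, -1}" "c1 \<in> {1, -1}" "c2 \<in> {1, -1}"
    "N $$ (i1, j1) = r1 * c1" "N $$ (i1, j2) = r1 * c2"
    "N $$ (i2, j1) = r2 * c1" "N $$ (i2, j2) = r2 * c2" using assms(6) by blast
  define P where "P = {(R,C). R \<subseteq> {..<m} \<and> C \<subseteq> {..<n} \<and> 2 \<le> card R \<and> 2 \<le> card C \<and>
      (\<forall>i\<in>R. \<forall>j\<in>C. N $$ (i,j) \<noteq> 0)}"
  define f where "f = (\<lambda>(R::nat set, C::nat set). card R + card C)"
  have P0: "({i1,i2},{j1,j2}) \<in> P" unfolding P_def using h by auto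
  have finP: "finite P"
  proof -
    have "P \<subseteq> Pow {..<m} \<times> Pow {..<n}" unfolding P_def by auto
    then show ?thesis using finite_subset by blast
  qed
  have "Max (f ` P) \<in> f ` P" using finP P0 by (intro Max_in) auto
  then obtain R C where RC: "(R,C) \<in> P" "f (R,C) = Max (f ` P)" by auto
  have best: "\<And>R' C'. (R',C') \<in> P \<Longrightarrow> f (R',C') \<le> f (R,C)"
    using RC(2) finP by (metis Max_ge finite_imageI image_eqI)
  have RCp: "R \<subseteq> {..<m}" "C \<subseteq> {..<n}" "2 \<le> card R" "2 \<le> card C" "\<And>i j. i\<in>R \<Longrightarrow> j\<in>C \<Longrightarrow> N $$ (i,j) \<noteq> 0"
    using RC(1) unfolding P_def by auto
  have finR: "finite R" using RCp(1) finite_subset by blast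
  have finC: "finite C" using RCp(2) finite_subset by blast
  interpret blk N m n R C
  proof
    show "N \<in> carrier_mat m n" "totally_unimodular N" by (fact assms(1), fact assms(4))
    show "R \<subseteq> {..<m}" "C \<subseteq> {..<n}" "2 \<le> card R" "2 \<le> card C" by (fact RCp)+
    show "\<And>i j. i \<in> R \<Longrightarrow> j \<in> C \<Longrightarrow> N $$ (i,j) \<noteq> 0" by (fact RCp(5))
  next
    fix i assume i: "i < m" "i \<notin> R"
    show "\<exists>j\<in>C. N $$ (i,j) = 0"
    proof (rule ccontr)
      assume "\<not> (\<exists>j\<in>C. N $$ (i,j) = 0)"
      then have "(insert i R, C) \<in> P" using RCp i finR unfolding P_def by (auto simp: card_insert_if)
      from best[OF this] show False using i finR by (simp add: f_def)
    qed
  next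
    fix j assume j: "j < n" "j \<notin> C"
    show "\<exists>i\<in>R. N $$ (i,j) = 0"
    proof (rule ccontr)
      assume "\<not> (\<exists>i\<in>R. N $$ (i,j) = 0)"
      then have "(R, insert j C) \<in> P" using RCp j finC unfolding P_def by (auto simp: card_insert_if)
      from best[OF this] show False using j finC by (simp add: f_def)
    qed
  qed
  show False
  proof (cases bad)
    case True then show False using bad_contra SU by blast
  next
    case False then show False using not_bad_sep assms(5) by blast
  qed
qed


end
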